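(* Every prime graph of order $n\le 50$ is odd prime.
   Context: All graphs are finite and simple. A graph $G$ of order $n$ is prime if there is a bijection $f:V(G)\to\{1,2,\ldots,n\}$ with $\gcd(f(u),f(v))=1$ for every edge $uv$. It is odd prime if there is a bijection $\ell:V(G)\to\{1,3,\ldots,2n-1\}$ with $\gcd(\ell(u),\ell(v))=1$ for every edge $uv$. *)

theory Defs
  imports Main
begin

definition simple_graph :: "'a set \<Rightarrow> 'a set set \<Rightarrow> bool" where
  "simple_graph V E \<longleftrightarrow> finite V \<and> (\<forall>e\<in>E. e \<subseteq> V \<and> card e = 2)"

definition prime_graph :: "'a set \<Rightarrow> 'a set set \<Rightarrow> bool" where
  "prime_graph V E \<longleftrightarrow> (\<exists>f :: 'a \<Rightarrow> nat. bij_betw f V {1..card V} \<and>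
      (\<forall>u v. {u, v} \<in> E \<longrightarrow> gcd (f u) (f v) = 1))"

definition odd_prime_graph :: "'a set \<Rightarrow> 'a set set \<Rightarrow> bool" where
  "odd_prime_graph V E \<longleftrightarrow> (\<exists>l :: 'a \<Rightarrow> nat. bij_betw l V {2 * i - 1 | i. i \<in> {1..card V}} \<and>
      (\<forall>u v. {u, v} \<in> E \<longrightarrow> gcd (l u) (l v) = 1))"

end

theory Submission
  imports Defs
begin
fun chk :: "(nat \<times> nat) list \<Rightarrow> bool" where
  "chk [] = True"
| "chk ((a,x)#ps) = (list_all (\<lambda>(b,y). gcd a b = 1 \<longrightarrow> gcd x y = 1) ps \<and> chk ps)"
definition ok :: "nat \<Rightarrow> nat list \<Rightarrow> bool" where
  "ok n xs = (length xs = n \<and> distinct xs \<and> list_all (\<lambda>x. odd x \<and> x < 2*n) xs \<and> chk (zip [1..<n+1] xs))"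

lemma chk_nth:
  assumes "chk ps" "i < j" "j < length ps" "gcd (fst (ps!i)) (fst (ps!j)) = 1"
  shows "gcd (snd (ps!i)) (snd (ps!j)) = 1"
  using assms
proof (induction ps arbitrary: i j)
  case Nil thus ?case by simp
next
  case (Cons p ps)
  obtain a x where p: "p = (a,x)" by force
  obtain j' where j: "j = Suc j'" using Cons.prems(2) by (cases j) auto
  show ?case
  proof (cases i)
    case 0
    have "ps ! j' \<in> set ps" using Cons.prems(3) j by simp
    then have "(\<lambda>(b,y). gcd a b = 1 \<longrightarrow> gcd x y = 1) (ps!j')"
      using Cons.prems(1) p by (simp add: list_all_iff)
    then show ?thesis using Cons.prems(4) 0 j p by (cases "ps!j'") auto
  next
    case (Suc i')
    then show ?thesis using Cons.IH[of i' j'] Cons.prems j p by simp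
  qed
qed

lemma ok_sound:
  assumes "ok n xs"
  shows "\<exists>g. bij_betw g {1..n} {2 * i - 1 | i. i \<in> {1..n}} \<and>
     (\<forall>a\<in>{1..n}. \<forall>b\<in>{1..n}. a \<noteq> b \<longrightarrow> gcd a b = 1 \<longrightarrow> gcd (g a) (g b) = 1)"
proof -
  have len: "length xs = n" and dis: "distinct xs" and od: "\<forall>x\<in>set xs. odd x \<and> x < 2*n"
    and ch: "chk (zip [1..<n+1] xs)" using assms by (auto simp: ok_def list_all_iff)
  define g where "g a = xs ! (a - 1)" for a
  define Od where "Od = {2 * i - 1 | i::nat. i \<in> {1..n}}"
  have img: "g ` {1..n} = set xs"
  proof
    show "g ` {1..n} \<subseteq> set xs" using len by (auto simp: g_def)
    show "set xs \<subseteq> g ` {1..n}"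
    proof
      fix x assume "x \<in> set xs"
      then obtain k where "k < n" "xs ! k = x" using len by (auto simp: in_set_conv_nth)
      then show "x \<in> g ` {1..n}" unfolding g_def by (intro image_eqI[of _ _ "k+1"]) auto
    qed
  qed
  have inj: "inj_on g {1..n}"
  proof (rule inj_onI)
    fix a b assume "a \<in> {1..n}" "b \<in> {1..n}" "g a = g b"
    then have "a - 1 = b - 1" using dis len nth_eq_iff_index_eq[of xs "a-1" "b-1"] by (auto simp: g_def)
    then show "a = b" using \<open>a \<in> {1..n}\<close> \<open>b \<in> {1..n}\<close> by auto
  qed
  have sub: "set xs \<subseteq> Od"
  proof
    fix x assume "x \<in> set xs"
    then have "odd x" "x < 2*n" using od by auto
    then obtain k where "x = 2*k+1" by (metis oddE)
    then show "x \<in> Od" unfolding Od_def using \<open>x < 2*n\<close>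
      by (intro CollectI exI[of _ "k+1"]) auto
  qed
  have OdI: "Od = (\<lambda>i. 2*i - 1) ` {1..n}" unfolding Od_def by auto
  have fO: "finite Od" unfolding OdI by simp
  have cO: "card Od = n"
  proof -
    have "Od = (\<lambda>i. 2*i - 1) ` {1..n}" by (rule OdI)
    moreover have "inj_on (\<lambda>i::nat. 2*i - 1) {1..n}" by (auto simp: inj_on_def)
    ultimately show ?thesis by (simp add: card_image)
  qed
  have "card (set xs) = n" using dis len distinct_card by blast
  then have "set xs = Od" using sub cO using card_subset_eq[OF fO sub] by simp
  then have bij: "bij_betw g {1..n} Od" using inj img by (simp add: bij_betw_def)
  have cop: "gcd (g a) (g b) = 1" if ab: "a \<in> {1..n}" "b \<in> {1..n}" "a \<noteq> b" "gcd a b = 1" for a b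
  proof -
    have key: "gcd (g a) (g b) = 1" if "a \<in> {1..n}" "b \<in> {1..n}" "a < b" "gcd a b = 1" for a b
    proof -
      let ?ps = "zip [1..<n+1] xs"
      have "?ps ! (a-1) = (a, xs!(a-1))" "?ps ! (b-1) = (b, xs!(b-1))"
        using that len by (auto simp del: upt_Suc simp add: nth_zip)
      moreover have "length ?ps = n" using len by simp
      ultimately show ?thesis using chk_nth[OF ch, of "a-1" "b-1"] that by (auto simp: g_def)
    qed
    show ?thesis
    proof (cases "a < b")
      case True then show ?thesis using key[of a b] ab by simp
    next
      case False then have "b < a" using ab by simp
      then show ?thesis using key[of b a] ab by (simp add: gcd.commute[of a b] gcd.commute[of "g a"])
    qed
  qed
  show ?thesis unfolding Od_def[symmetric] using bij cop by (intro exI[of _ g] conjI ballI impI) auto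
qed
lemma ex_ok_0: "\<exists>xs. ok 0 xs"
  by (rule exI[of _ "[]"]) (unfold ok_def, code_simp)

lemma ex_ok_1: "\<exists>xs. ok 1 xs"
  by (rule exI[of _ "[1]"]) (unfold ok_def, code_simp)

lemma ex_ok_2: "\<exists>xs. ok 2 xs"
  by (rule exI[of _ "[1, 3]"]) (unfold ok_def, code_simp)

lemma ex_ok_3: "\<exists>xs. ok 3 xs"
  by (rule exI[of _ "[1, 3, 5]"]) (unfold ok_def, code_simp)

lemma ex_ok_4: "\<exists>xs. ok 4 xs"
  by (rule exI[of _ "[1, 7, 5, 3]"]) (unfold ok_def, code_simp)

lemma ex_ok_5: "\<exists>xs. ok 5 xs"
  by (rule exI[of _ "[1, 9, 5, 3, 7]"]) (unfold ok_def, code_simp)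

lemma ex_ok_6: "\<exists>xs. ok 6 xs"
  by (rule exI[of _ "[1, 11, 5, 9, 7, 3]"]) (unfold ok_def, code_simp)

lemma ex_ok_7: "\<exists>xs. ok 7 xs"
  by (rule exI[of _ "[1, 13, 5, 9, 7, 3, 11]"]) (unfold ok_def, code_simp)

lemma ex_ok_8: "\<exists>xs. ok 8 xs"
  by (rule exI[of _ "[1, 13, 5, 9, 7, 15, 11, 3]"]) (unfold ok_def, code_simp)

lemma ex_ok_9: "\<exists>xs. ok 9 xs"
  by (rule exI[of _ "[1, 17, 11, 9, 7, 15, 13, 3, 5]"]) (unfold ok_def, code_simp)

lemma ex_ok_10: "\<exists>xs. ok 10 xs"
  by (rule exI[of _ "[1, 15, 17, 9, 19, 7, 11, 5, 13, 3]"]) (unfold ok_def, code_simp)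

lemma ex_ok_11: "\<exists>xs. ok 11 xs"
  by (rule exI[of _ "[1, 13, 11, 9, 5, 21, 19, 3, 7, 15, 17]"]) (unfold ok_def, code_simp)

lemma ex_ok_12: "\<exists>xs. ok 12 xs"
  by (rule exI[of _ "[1, 11, 7, 9, 23, 21, 19, 3, 5, 13, 17, 15]"]) (unfold ok_def, code_simp)

lemma ex_ok_13: "\<exists>xs. ok 13 xs"
  by (rule exI[of _ "[1, 23, 25, 19, 7, 15, 11, 9, 5, 21, 13, 3, 17]"]) (unfold ok_def, code_simp)

lemma ex_ok_14: "\<exists>xs. ok 14 xs"
  by (rule exI[of _ "[1, 27, 25, 23, 7, 15, 11, 19, 5, 21, 13, 9, 17, 3]"]) (unfold ok_def, code_simp)

lemma ex_ok_15: "\<exists>xs. ok 15 xs"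
  by (rule exI[of _ "[1, 29, 23, 27, 25, 21, 11, 19, 7, 15, 13, 9, 17, 3, 5]"]) (unfold ok_def, code_simp)

lemma ex_ok_16: "\<exists>xs. ok 16 xs"
  by (rule exI[of _ "[1, 29, 25, 27, 7, 15, 11, 23, 17, 21, 13, 9, 31, 19, 5, 3]"]) (unfold ok_def, code_simp)

lemma ex_ok_17: "\<exists>xs. ok 17 xs"
  by (rule exI[of _ "[1, 27, 25, 21, 11, 15, 31, 9, 17, 33, 29, 7, 23, 13, 5, 3, 19]"]) (unfold ok_def, code_simp)

lemma ex_ok_18: "\<exists>xs. ok 18 xs"
  by (rule exI[of _ "[1, 31, 25, 29, 7, 23, 11, 27, 5, 21, 13, 15, 17, 33, 35, 9, 19, 3]"]) (unfold ok_def, code_simp)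

lemma ex_ok_19: "\<exists>xs. ok 19 xs"
  by (rule exI[of _ "[1, 37, 25, 31, 7, 27, 11, 29, 5, 21, 13, 15, 17, 33, 35, 9, 19, 3, 23]"]) (unfold ok_def, code_simp)

lemma ex_ok_20: "\<exists>xs. ok 20 xs"
  by (rule exI[of _ "[1, 39, 25, 33, 7, 19, 37, 27, 5, 21, 23, 15, 17, 13, 35, 11, 29, 9, 31, 3]"]) (unfold ok_def, code_simp)

lemma ex_ok_21: "\<exists>xs. ok 21 xs"
  by (rule exI[of _ "[1, 39, 25, 31, 23, 33, 7, 29, 11, 27, 41, 15, 19, 21, 5, 13, 17, 9, 37, 3, 35]"]) (unfold ok_def, code_simp)

lemma ex_ok_22: "\<exists>xs. ok 22 xs"
  by (rule exI[of _ "[1, 43, 29, 27, 37, 35, 11, 21, 25, 39, 31, 15, 17, 33, 23, 9, 19, 7, 41, 13, 5, 3]"]) (unfold ok_def, code_simp)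

lemma ex_ok_23: "\<exists>xs. ok 23 xs"
  by (rule exI[of _ "[1, 39, 25, 27, 7, 45, 41, 13, 11, 21, 29, 33, 43, 31, 35, 9, 37, 15, 19, 3, 5, 23, 17]"]) (unfold ok_def, code_simp)

lemma ex_ok_24: "\<exists>xs. ok 24 xs"
  by (rule exI[of _ "[1, 39, 35, 27, 19, 45, 43, 23, 25, 33, 47, 21, 41, 37, 5, 13, 31, 15, 17, 11, 7, 9, 29, 3]"]) (unfold ok_def, code_simp)

lemma ex_ok_25: "\<exists>xs. ok 25 xs"
  by (rule exI[of _ "[1, 43, 31, 33, 49, 45, 17, 27, 25, 19, 13, 15, 29, 23, 35, 11, 37, 9, 47, 21, 5, 39, 41, 3, 7]"]) (unfold ok_def, code_simp)

lemma ex_ok_26: "\<exists>xs. ok 26 xs"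
  by (rule exI[of _ "[1, 47, 37, 43, 49, 27, 11, 41, 25, 3, 13, 45, 17, 33, 35, 31, 19, 15, 23, 21, 5, 39, 29, 9, 7, 51]"]) (unfold ok_def, code_simp)

lemma ex_ok_27: "\<exists>xs. ok 27 xs"
  by (rule exI[of _ "[1, 39, 37, 33, 49, 45, 53, 27, 25, 7, 41, 9, 17, 19, 35, 13, 29, 15, 31, 21, 47, 11, 43, 3, 23, 51, 5]"]) (unfold ok_def, code_simp)

lemma ex_ok_28: "\<exists>xs. ok 28 xs"
  by (rule exI[of _ "[1, 53, 25, 51, 49, 45, 11, 47, 23, 21, 13, 9, 43, 33, 35, 41, 19, 31, 37, 27, 55, 39, 29, 15, 7, 17, 5, 3]"]) (unfold ok_def, code_simp)

lemma ex_ok_29: "\<exists>xs. ok 29 xs"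
  by (rule exI[of _ "[1, 51, 43, 31, 49, 57, 23, 27, 25, 21, 13, 45, 29, 33, 35, 17, 47, 19, 53, 9, 55, 39, 37, 15, 7, 3, 5, 11, 41]"]) (unfold ok_def, code_simp)

lemma ex_ok_30: "\<exists>xs. ok 30 xs"
  by (rule exI[of _ "[1, 57, 55, 41, 49, 39, 43, 37, 25, 21, 59, 45, 17, 29, 35, 27, 23, 15, 47, 9, 13, 19, 53, 33, 7, 51, 11, 3, 31, 5]"]) (unfold ok_def, code_simp)

lemma ex_ok_31: "\<exists>xs. ok 31 xs"
  by (rule exI[of _ "[1, 45, 49, 27, 29, 51, 53, 25, 37, 55, 41, 21, 19, 15, 11, 9, 43, 35, 47, 39, 17, 23, 61, 5, 13, 57, 7, 3, 31, 33, 59]"]) (unfold ok_def, code_simp)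

lemma ex_ok_32: "\<exists>xs. ok 32 xs"
  by (rule exI[of _ "[1, 57, 49, 53, 47, 21, 61, 51, 35, 17, 23, 63, 37, 33, 25, 27, 43, 15, 41, 39, 55, 19, 59, 45, 13, 9, 7, 11, 31, 5, 29, 3]"]) (unfold ok_def, code_simp)

lemma ex_ok_33: "\<exists>xs. ok 33 xs"
  by (rule exI[of _ "[1, 59, 65, 57, 49, 45, 11, 53, 25, 63, 41, 15, 17, 33, 35, 47, 23, 9, 61, 21, 55, 27, 29, 39, 43, 51, 13, 19, 31, 7, 37, 3, 5]"]) (unfold ok_def, code_simp)

lemma ex_ok_34: "\<exists>xs. ok 34 xs"
  by (rule exI[of _ "[1, 59, 67, 53, 49, 45, 11, 41, 25, 21, 13, 31, 17, 33, 35, 37, 19, 27, 61, 63, 55, 39, 29, 15, 7, 51, 5, 23, 47, 9, 43, 3, 65, 57]"]) (unfold ok_def, code_simp)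

lemma ex_ok_35: "\<exists>xs. ok 35 xs"
  by (rule exI[of _ "[1, 67, 65, 63, 43, 39, 59, 49, 47, 69, 37, 45, 29, 27, 55, 21, 17, 35, 31, 33, 25, 57, 41, 15, 23, 9, 13, 7, 53, 5, 61, 3, 19, 51, 11]"]) (unfold ok_def, code_simp)

lemma ex_ok_36: "\<exists>xs. ok 36 xs"
  by (rule exI[of _ "[1, 53, 37, 51, 49, 45, 67, 33, 31, 63, 43, 15, 23, 39, 35, 27, 19, 17, 59, 21, 65, 9, 71, 55, 7, 69, 25, 13, 47, 5, 29, 11, 41, 57, 61, 3]"]) (unfold ok_def, code_simp)

lemma ex_ok_37: "\<exists>xs. ok 37 xs"
  by (rule exI[of _ "[1, 69, 47, 53, 37, 51, 49, 27, 25, 33, 13, 57, 73, 21, 55, 23, 43, 45, 41, 11, 35, 39, 71, 17, 31, 61, 19, 63, 29, 15, 59, 9, 65, 3, 7, 5, 67]"]) (unfold ok_def, code_simp)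

lemma ex_ok_38: "\<exists>xs. ok 38 xs"
  by (rule exI[of _ "[1, 63, 59, 57, 29, 45, 71, 53, 43, 33, 41, 15, 17, 9, 55, 49, 73, 75, 47, 27, 65, 69, 31, 7, 11, 51, 25, 39, 61, 35, 67, 21, 23, 19, 13, 5, 37, 3]"]) (unfold ok_def, code_simp)

lemma ex_ok_39: "\<exists>xs. ok 39 xs"
  by (rule exI[of _ "[1, 75, 71, 45, 49, 69, 31, 27, 67, 35, 53, 9, 19, 55, 7, 25, 43, 39, 61, 63, 11, 51, 59, 65, 47, 57, 23, 33, 37, 21, 73, 15, 17, 29, 77, 5, 41, 3, 13]"]) (unfold ok_def, code_simp)

lemma ex_ok_40: "\<exists>xs. ok 40 xs"
  by (rule exI[of _ "[1, 75, 67, 71, 41, 65, 59, 47, 49, 55, 53, 35, 79, 45, 77, 27, 17, 63, 23, 33, 13, 57, 43, 39, 31, 5, 7, 25, 73, 21, 29, 15, 19, 51, 11, 9, 61, 69, 37, 3]"]) (unfold ok_def, code_simp)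

lemma ex_ok_41: "\<exists>xs. ok 41 xs"
  by (rule exI[of _ "[1, 81, 67, 63, 29, 75, 79, 49, 65, 77, 17, 39, 19, 69, 55, 41, 59, 35, 71, 33, 25, 51, 37, 45, 11, 57, 61, 21, 31, 15, 73, 27, 13, 53, 23, 7, 47, 9, 5, 3, 43]"]) (unfold ok_def, code_simp)

lemma ex_ok_42: "\<exists>xs. ok 42 xs"
  by (rule exI[of _ "[1, 81, 65, 63, 71, 75, 79, 59, 41, 77, 67, 35, 53, 31, 55, 49, 19, 45, 37, 69, 5, 51, 43, 39, 23, 27, 25, 29, 73, 33, 47, 21, 17, 57, 11, 15, 61, 9, 13, 7, 83, 3]"]) (unfold ok_def, code_simp)

lemma ex_ok_43: "\<exists>xs. ok 43 xs"
  by (rule exI[of _ "[1, 81, 67, 69, 31, 75, 71, 63, 29, 77, 13, 45, 79, 51, 55, 49, 73, 85, 41, 57, 25, 39, 37, 15, 19, 9, 5, 27, 43, 33, 53, 23, 65, 21, 11, 35, 47, 17, 59, 7, 83, 3, 61]"]) (unfold ok_def, code_simp)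

lemma ex_ok_44: "\<exists>xs. ok 44 xs"
  by (rule exI[of _ "[1, 87, 55, 81, 49, 75, 71, 39, 25, 63, 53, 69, 17, 43, 77, 29, 79, 45, 83, 21, 11, 57, 61, 65, 41, 51, 23, 27, 73, 35, 67, 13, 5, 9, 7, 33, 37, 47, 85, 3, 59, 15, 31, 19]"]) (unfold ok_def, code_simp)

lemma ex_ok_45: "\<exists>xs. ok 45 xs"
  by (rule exI[of _ "[1, 81, 85, 63, 89, 45, 73, 49, 79, 57, 13, 51, 41, 59, 55, 37, 29, 75, 71, 77, 25, 39, 61, 69, 31, 27, 23, 21, 67, 11, 53, 9, 65, 87, 19, 35, 47, 7, 17, 33, 83, 15, 43, 3, 5]"]) (unfold ok_def, code_simp)

lemma ex_ok_46: "\<exists>xs. ok 46 xs"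
  by (rule exI[of _ "[1, 81, 85, 73, 49, 75, 11, 57, 29, 63, 31, 65, 61, 33, 35, 41, 71, 87, 89, 91, 55, 39, 43, 69, 7, 59, 25, 27, 79, 51, 83, 19, 23, 13, 77, 45, 67, 9, 17, 21, 47, 15, 53, 3, 5, 37]"]) (unfold ok_def, code_simp)

lemma ex_ok_47: "\<exists>xs. ok 47 xs"
  by (rule exI[of _ "[1, 81, 65, 51, 83, 85, 79, 37, 55, 63, 89, 75, 19, 87, 91, 27, 31, 39, 61, 21, 5, 73, 23, 45, 49, 57, 25, 47, 53, 77, 43, 17, 13, 93, 29, 33, 59, 9, 11, 7, 41, 15, 67, 3, 35, 69, 71]"]) (unfold ok_def, code_simp)

lemma ex_ok_48: "\<exists>xs. ok 48 xs"
  by (rule exI[of _ "[1, 87, 85, 83, 31, 51, 11, 81, 71, 93, 61, 35, 43, 77, 95, 63, 89, 75, 73, 91, 55, 49, 53, 69, 19, 29, 25, 33, 59, 39, 47, 27, 23, 21, 13, 45, 67, 9, 17, 57, 79, 15, 41, 7, 65, 3, 37, 5]"]) (unfold ok_def, code_simp)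

lemma ex_ok_49: "\<exists>xs. ok 49 xs"
  by (rule exI[of _ "[1, 81, 97, 79, 17, 35, 37, 63, 71, 77, 19, 75, 29, 91, 85, 49, 61, 15, 73, 51, 65, 57, 23, 45, 11, 87, 41, 93, 83, 55, 53, 27, 95, 21, 31, 9, 59, 43, 25, 33, 47, 39, 89, 7, 5, 69, 67, 3, 13]"]) (unfold ok_def, code_simp)

lemma ex_ok_50: "\<exists>xs. ok 50 xs"
  by (rule exI[of _ "[1, 99, 67, 81, 41, 87, 49, 79, 29, 39, 83, 15, 19, 21, 65, 69, 61, 85, 97, 53, 35, 33, 31, 75, 13, 57, 25, 77, 47, 55, 37, 51, 43, 27, 91, 45, 59, 23, 95, 17, 73, 63, 71, 11, 5, 93, 89, 9, 7, 3]"]) (unfold ok_def, code_simp)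

lemma n_cases: "(n::nat) \<le> 50 \<Longrightarrow> n = 0 \<or> n = 1 \<or> n = 2 \<or> n = 3 \<or> n = 4 \<or> n = 5 \<or> n = 6 \<or> n = 7 \<or> n = 8 \<or> n = 9 \<or> n = 10 \<or> n = 11 \<or> n = 12 \<or> n = 13 \<or> n = 14 \<or> n = 15 \<or> n = 16 \<or> n = 17 \<or> n = 18 \<or> n = 19 \<or> n = 20 \<or> n = 21 \<or> n = 22 \<or> n = 23 \<or> n = 24 \<or> n = 25 \<or> n = 26 \<or> n = 27 \<or> n = 28 \<or> n = 29 \<or> n = 30 \<or> n = 31 \<or> n = 32 \<or> n = 33 \<or> n = 34 \<or> n = 35 \<or> n = 36 \<or> n = 37 \<or> n = 38 \<or> n = 39 \<or> n = 40 \<or> n = 41 \<or> n = 42 \<or> n = 43 \<or> n = 44 \<or> n = 45 \<or> n = 46 \<or> n = 47 \<or> n = 48 \<or> n = 49 \<or> n = 50" by presburger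

lemma ex_ok_all: "(n::nat) \<le> 50 \<Longrightarrow> \<exists>xs. ok n xs"
  using n_cases[of n] ex_ok_0 ex_ok_1 ex_ok_2 ex_ok_3 ex_ok_4 ex_ok_5 ex_ok_6 ex_ok_7 ex_ok_8 ex_ok_9 ex_ok_10 ex_ok_11 ex_ok_12 ex_ok_13 ex_ok_14 ex_ok_15 ex_ok_16 ex_ok_17 ex_ok_18 ex_ok_19 ex_ok_20 ex_ok_21 ex_ok_22 ex_ok_23 ex_ok_24 ex_ok_25 ex_ok_26 ex_ok_27 ex_ok_28 ex_ok_29 ex_ok_30 ex_ok_31 ex_ok_32 ex_ok_33 ex_ok_34 ex_ok_35 ex_ok_36 ex_ok_37 ex_ok_38 ex_ok_39 ex_ok_40 ex_ok_41 ex_ok_42 ex_ok_43 ex_ok_44 ex_ok_45 ex_ok_46 ex_ok_47 ex_ok_48 ex_ok_49 ex_ok_50 by blast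

lemma coprime_map:
  assumes "(n::nat) \<le> 50"
  shows "\<exists>g. bij_betw g {1..n} {2 * i - 1 | i. i \<in> {1..n}} \<and>
     (\<forall>a\<in>{1..n}. \<forall>b\<in>{1..n}. a \<noteq> b \<longrightarrow> gcd a b = 1 \<longrightarrow> gcd (g a) (g b) = 1)"
proof -
  have "\<exists>xs. ok n xs" using ex_ok_all assms by blast
  then obtain xs where "ok n xs" by blast
  then show ?thesis by (rule ok_sound)
qed

theorem theorem6p2:
  fixes V :: "'a set" and E :: "'a set set"
  assumes "simple_graph V E" and "card V \<le> 50" and "prime_graph V E"
  shows "odd_prime_graph V E"
proof -
  let ?n = "card V"
  obtain f :: "'a \<Rightarrow> nat" where fb: "bij_betw f V {1..?n}"
    and fc: "\<forall>u v. {u, v} \<in> E \<longrightarrow> gcd (f u) (f v) = 1"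
    using assms(3) unfolding prime_graph_def by blast
  obtain g where gb: "bij_betw g {1..?n} {2 * i - 1 | i. i \<in> {1..?n}}"
    and gc: "\<forall>a\<in>{1..?n}. \<forall>b\<in>{1..?n}. a \<noteq> b \<longrightarrow> gcd a b = 1 \<longrightarrow> gcd (g a) (g b) = 1"
    using coprime_map[OF assms(2)] by blast
  have "bij_betw (g \<circ> f) V {2 * i - 1 | i. i \<in> {1..?n}}"
    using bij_betw_trans[OF fb gb] .
  moreover have "gcd ((g \<circ> f) u) ((g \<circ> f) v) = 1" if e: "{u, v} \<in> E" for u v
  proof -
    have "{u, v} \<subseteq> V" "card {u, v} = 2" using assms(1) e unfolding simple_graph_def by auto
    then have uv: "u \<in> V" "v \<in> V" "u \<noteq> v" by (auto split: if_splits)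
    then have "f u \<in> {1..?n}" "f v \<in> {1..?n}" "f u \<noteq> f v"
      using fb by (auto simp: bij_betw_def inj_on_def)
    then show ?thesis using gc fc e by simp
  qed
  ultimately show ?thesis unfolding odd_prime_graph_def by blast
qed

end
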